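(* Let $\kappa\ge0$, $\beta>0$ and $U\in\mathbb{R}$. For $n\ge0$ sufficiently small (so that $t(n):=1+Un>0$), put $G(n):=t(n)^2+\kappa^2$ and let $\lambda^2(n)$ denote the unique positive solution $x$ of $$G(n)\Big[n\,t(n)^2+\frac{\beta^2}{16x}G(n)\Big]=x\,t(n)^2 .$$ Define $\delta(n):=4\lambda^2(n)-\beta(1+\kappa^2)$. Then, as $n\to0^+$, $$\delta(n)=A\,n+B\,n^2+C\,n^3+O(n^4),$$ where \begin{align*} A&=2(1+\kappa^2)-\beta U(\kappa^2-1),\\ B&=\beta\kappa^2U^2+4U+\frac{2(1+\kappa^2)}{\beta},\\ C&=\frac U\beta\Big(-\beta^2\kappa^2U^2+2\beta U+2\kappa^2+6\Big). \end{align*}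
   Context: The defining equation for $\lambda^2(n)$ is the superradiant steady-state equation $f(s)=0$ of the mean-field dissipative quantum Rabi model with Kerr nonlinearity, with $s=Un$ and $n=|\alpha|^2$ the photon-number order parameter, in normalized units ($\kappa,\lambda$ stand for $\kappa/\omega_c,\lambda/\omega_c$, $\beta=\omega_a/\omega_c$, $U=2KN/\omega_c$); multiplied by $x$ it is a quadratic in $x$ with exactly one positive root. $\delta$ measures the distance of the coupling from the normal-phase threshold $4\lambda_c^2=\beta(1+\kappa^2)$. *)

theory Defs
  imports "HOL-Analysis.Analysis" "HOL-Library.Landau_Symbols"
begin

definition tfun :: "real \<Rightarrow> real \<Rightarrow> real" where
  "tfun U n = 1 + U * n"

definition Gfun :: "real \<Rightarrow> real \<Rightarrow> real \<Rightarrow> real" where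
  "Gfun \<kappa> U n = (tfun U n)^2 + \<kappa>^2"

definition lam2 :: "real \<Rightarrow> real \<Rightarrow> real \<Rightarrow> real \<Rightarrow> real" where
  "lam2 \<kappa> \<beta> U n = (THE x. x > 0 \<and>
      Gfun \<kappa> U n * (n * (tfun U n)^2 + \<beta>^2 / (16 * x) * Gfun \<kappa> U n) = x * (tfun U n)^2)"

definition delta :: "real \<Rightarrow> real \<Rightarrow> real \<Rightarrow> real \<Rightarrow> real" where
  "delta \<kappa> \<beta> U n = 4 * lam2 \<kappa> \<beta> U n - \<beta> * (1 + \<kappa>^2)"

end

theory Submission imports Defs begin

lemma quad_unique:
  fixes T b c x y :: real
  assumes "T > 0" "c > 0" "x > 0" "y > 0" "T*x^2 - b*x - c = 0" "T*y^2 - b*y - c = 0"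
  shows "x = y"
proof (rule ccontr)
  assume ne: "x \<noteq> y"
  have "(x - y) * (T*(x+y) - b) = 0" using assms(5,6) by (simp add: algebra_simps power2_eq_square)
  hence "b = T*(x+y)" using ne by simp
  hence "c = - T*x*y" using assms(5) by (simp add: algebra_simps power2_eq_square)
  moreover have "T*x*y > 0" using assms by simp
  ultimately show False using assms(2) by linarith
qed

lemma quad_exists:
  fixes T b c :: real
  assumes "T > 0" "c > 0"
  defines "x0 \<equiv> (b + sqrt (b^2 + 4*T*c)) / (2*T)"
  shows "x0 > 0" "T*x0^2 - b*x0 - c = 0"
proof -
  have D: "b^2 + 4*T*c > b^2" using assms by simp
  have s: "sqrt (b^2 + 4*T*c) > \<bar>b\<bar>"
    using real_sqrt_less_mono[OF D] by simp
  show "x0 > 0" unfolding x0_def using s assms by (simp add: divide_pos_pos)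
  have ss: "(sqrt (b^2 + 4*T*c))^2 = b^2 + 4*T*c" using D
    by (simp add: add_nonneg_nonneg)
  show "T*x0^2 - b*x0 - c = 0" unfolding x0_def using assms(1) ss
    by (simp add: field_simps power2_eq_square)
qed

lemma lam2_prop:
  fixes \<kappa> \<beta> U n :: real
  assumes "\<beta> > 0" "tfun U n \<noteq> 0"
  shows "lam2 \<kappa> \<beta> U n > 0 \<and> (tfun U n)^2 * (lam2 \<kappa> \<beta> U n)^2
     - Gfun \<kappa> U n * n * (tfun U n)^2 * lam2 \<kappa> \<beta> U n - \<beta>^2 * (Gfun \<kappa> U n)^2/16 = 0"
proof -
  define T where "T = (tfun U n)^2"
  define g where "g = Gfun \<kappa> U n"
  have T: "T > 0" using assms(2) unfolding T_def by simp
  have g: "g > 0" unfolding g_def Gfun_def using assms(2) by (simp add: add_pos_nonneg)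
  define c where "c = \<beta>^2 * g^2/16"
  have c: "c > 0" unfolding c_def using assms(1) g by simp
  define b where "b = g * n * T"
  have eqv: "(x > 0 \<and> g * (n * T + \<beta>^2 / (16 * x) * g) = x * T) \<longleftrightarrow> (x > 0 \<and> T*x^2 - b*x - c = 0)" for x
  proof (cases "x > 0")
    case True
    have "g * (n * T + \<beta>^2 / (16 * x) * g) = (b*x + c)/x" using True unfolding b_def c_def
      by (simp add: field_simps power2_eq_square)
    also have "\<dots> = x * T \<longleftrightarrow> b*x + c = x * T * x" using True by (simp add: divide_eq_eq)
    also have "\<dots> \<longleftrightarrow> T*x^2 - b*x - c = 0" by (auto simp: algebra_simps power2_eq_square)
    finally show ?thesis using True by simp
  qed simp
  define x0 where "x0 = (b + sqrt (b^2 + 4*T*c)) / (2*T)"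
  have x0: "x0 > 0" "T*x0^2 - b*x0 - c = 0" using quad_exists[OF T c] unfolding x0_def by auto
  have "lam2 \<kappa> \<beta> U n = x0"
    unfolding lam2_def T_def[symmetric] g_def[symmetric]
  proof (rule the_equality)
    show "x0 > 0 \<and> g * (n * T + \<beta>^2 / (16 * x0) * g) = x0 * T" using eqv x0 by blast
    fix x assume "x > 0 \<and> g * (n * T + \<beta>^2 / (16 * x) * g) = x * T"
    hence "x > 0" "T*x^2 - b*x - c = 0" using eqv by blast+
    thus "x = x0" using quad_unique[OF T c _ x0(1) _ x0(2)] by blast
  qed
  thus ?thesis using x0 unfolding T_def[symmetric] g_def[symmetric]
    by (simp add: b_def c_def algebra_simps)
qed


theorem mainTheorem5:
  fixes \<kappa> \<beta> U :: real
  assumes "\<kappa> \<ge> 0" and "\<beta> > 0"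
  defines "A \<equiv> 2 * (1 + \<kappa>^2) - \<beta> * U * (\<kappa>^2 - 1)"
      and "B \<equiv> \<beta> * \<kappa>^2 * U^2 + 4 * U + 2 * (1 + \<kappa>^2) / \<beta>"
      and "C \<equiv> U / \<beta> * (- (\<beta>^2 * \<kappa>^2 * U^2) + 2 * \<beta> * U + 2 * \<kappa>^2 + 6)"
  shows "(\<lambda>n. delta \<kappa> \<beta> U n - (A * n + B * n^2 + C * n^3)) \<in> O[at_right 0](\<lambda>n. n^4)"
proof -
  define p where "p n = \<beta>*(1+\<kappa>^2) + A*n + B*n^2 + C*n^3" for n
  define q where "q n = \<beta>^2*(1+\<kappa>^2) + \<beta>*(2 * (1 + \<kappa>^2) - \<beta> * U * (\<kappa>^2 - 1))*n
     + (\<beta>^2*\<kappa>^2*U^2 + 4*\<beta>*U + 2*(1+\<kappa>^2))*n^2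
     + U*(- (\<beta>^2 * \<kappa>^2 * U^2) + 2 * \<beta> * U + 2 * \<kappa>^2 + 6)*n^3" for n
  have pq: "\<beta> * p n = q n" for n
    unfolding p_def q_def A_def B_def C_def using assms(2) by (simp add: field_simps power2_eq_square)
  define R where "R n = (4) + (-12) * \<beta>^2 * U ^ 2 + (8) * \<kappa> ^ 2 + (-12) * \<kappa> ^ 2 * \<beta>^2 * U ^ 2 + (-2) * \<kappa> ^ 2 * \<beta> ^ 4 * U ^ 4 + (4) * \<kappa> ^ 4 + (-2) * \<kappa> ^ 4 * \<beta> ^ 4 * U ^ 4 + (32) * n ^ 1 * U ^ 1 + (-40) * n ^ 1 * \<beta>^2 * U ^ 3 + (48) * n ^ 1 * \<kappa> ^ 2 * U ^ 1 + (-16) * n ^ 1 * \<kappa> ^ 2 * \<beta>^2 * U ^ 3 + (-4) * n ^ 1 * \<kappa> ^ 2 * \<beta> ^ 4 * U ^ 5 + (16) * n ^ 1 * \<kappa> ^ 4 * U ^ 1 + (88) * n ^ 2 * U ^ 2 + (-48) * n ^ 2 * \<beta>^2 * U ^ 4 + (96) * n ^ 2 * \<kappa> ^ 2 * U ^ 2 + (-8) * n ^ 2 * \<kappa> ^ 2 * \<beta>^2 * U ^ 4 + (-2) * n ^ 2 * \<kappa> ^ 2 * \<beta> ^ 4 * U ^ 6 + (24) * n ^ 2 * \<kappa> ^ 4 * U ^ 2 + (-4) * n ^ 2 * \<kappa> ^ 4 * \<beta>^2 * U ^ 4 + (96) * n ^ 3 * U ^ 3 + (-24) * n ^ 3 *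 \<beta>^2 * U ^ 5 + (80) * n ^ 3 * \<kappa> ^ 2 * U ^ 3 + (-16) * n ^ 3 * \<kappa> ^ 2 * \<beta>^2 * U ^ 5 + (16) * n ^ 3 * \<kappa> ^ 4 * U ^ 3 + (-8) * n ^ 3 * \<kappa> ^ 4 * \<beta>^2 * U ^ 5 + (36) * n ^ 4 * U ^ 4 + (-4) * n ^ 4 * \<beta>^2 * U ^ 6 + (24) * n ^ 4 * \<kappa> ^ 2 * U ^ 4 + (-12) * n ^ 4 * \<kappa> ^ 2 * \<beta>^2 * U ^ 6 + (4) * n ^ 4 * \<kappa> ^ 4 * U ^ 4 + (-4) * n ^ 4 * \<kappa> ^ 4 * \<beta>^2 * U ^ 6 + (1) * n ^ 4 * \<kappa> ^ 4 * \<beta> ^ 4 * U ^ 8" for n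
  have QR: "(tfun U n)^2 * (q n)^2 - 4 * Gfun \<kappa> U n * n * (tfun U n)^2 * \<beta> * q n
      - \<beta>^4 * (Gfun \<kappa> U n)^2 = n^4 * R n" for n
    unfolding q_def R_def tfun_def Gfun_def by algebra
  define L where "L = \<beta>*(1+\<kappa>^2)"
  have L: "L > 0" unfolding L_def using assms(2) by (simp add: add_pos_nonneg)
  define D where "D n = (tfun U n)^2 * p n - 4 * Gfun \<kappa> U n * n * (tfun U n)^2" for n
  have D0: "D 0 = L" unfolding D_def p_def L_def tfun_def by simp
  have "isCont D 0" unfolding D_def p_def tfun_def Gfun_def by (intro continuous_intros)
  hence "(D \<longlongrightarrow> L) (at_right 0)" using D0
    by (metis isCont_def at_le subset_UNIV tendsto_mono)
  hence ev1: "eventually (\<lambda>n. D n > L/2) (at_right 0)" using L by (intro order_tendstoD(1)) auto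
  have "isCont (tfun U) 0" unfolding tfun_def by (intro continuous_intros)
  hence "(tfun U \<longlongrightarrow> 1) (at_right 0)"
    by (metis isCont_def at_le subset_UNIV tendsto_mono tfun_def mult_zero_right add_0_right)
  hence ev2: "eventually (\<lambda>n. tfun U n > 0) (at_right 0)" by (intro order_tendstoD(1)) auto
  define M where "M = \<bar>R 0\<bar> + 1"
  have "isCont (\<lambda>n. \<bar>R n\<bar>) 0" unfolding R_def by (intro continuous_intros)
  hence "((\<lambda>n. \<bar>R n\<bar>) \<longlongrightarrow> \<bar>R 0\<bar>) (at_right 0)"
    by (metis isCont_def at_le subset_UNIV tendsto_mono)
  hence ev3: "eventually (\<lambda>n. \<bar>R n\<bar> < M) (at_right 0)" unfolding M_def
    by (intro order_tendstoD(2)) auto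
  have ev4: "eventually (\<lambda>n::real. n > 0) (at_right 0)" by (rule eventually_at_right_less)
  show ?thesis
  proof (rule bigoI[where c = "2 * M / (\<beta>^2 * L)"])
    show "eventually (\<lambda>n. norm (delta \<kappa> \<beta> U n - (A * n + B * n^2 + C * n^3))
        \<le> 2 * M / (\<beta>^2 * L) * norm (n^4)) (at_right 0)"
      using ev1 ev2 ev3 ev4
    proof eventually_elim
      case (elim n)
      define t where "t = tfun U n"
      define g where "g = Gfun \<kappa> U n"
      define y where "y = 4 * lam2 \<kappa> \<beta> U n"
      have lp: "lam2 \<kappa> \<beta> U n > 0 \<and> t^2 * (lam2 \<kappa> \<beta> U n)^2
          - g * n * t^2 * lam2 \<kappa> \<beta> U n - \<beta>^2 * g^2/16 = 0"
        using lam2_prop[OF assms(2), of U n \<kappa>] elim unfolding t_def g_def by simp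
      have ypos: "y > 0" using lp unfolding y_def by simp
      have yeq: "t^2 * y^2 - 4 * g * n * t^2 * y - \<beta>^2 * g^2 = 0"
      proof -
        have "t^2 * y^2 - 4 * g * n * t^2 * y - \<beta>^2 * g^2 = 16 * (t^2 * (lam2 \<kappa> \<beta> U n)^2
          - g * n * t^2 * lam2 \<kappa> \<beta> U n - \<beta>^2 * g^2/16)" unfolding y_def
          by (simp add: algebra_simps power2_eq_square)
        thus ?thesis using lp by simp
      qed
      have del: "delta \<kappa> \<beta> U n - (A * n + B * n^2 + C * n^3) = y - p n"
        unfolding delta_def y_def p_def by simp
      define E where "E = t^2 * (y + p n) - 4 * g * n * t^2"
      have E: "E > L/2"
      proof -
        have "E = t^2 * y + D n" unfolding E_def D_def t_def g_def by (simp add: algebra_simps)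
        moreover have "t^2 * y > 0" using ypos elim unfolding t_def by simp
        ultimately show ?thesis using elim by simp
      qed
      have key: "(y - p n) * E * \<beta>^2 = - (n^4 * R n)"
      proof -
        have "(y - p n) * E * \<beta>^2 = (t^2 * y^2 - 4 * g * n * t^2 * y - \<beta>^2 * g^2) * \<beta>^2
           - (t^2 * (\<beta> * p n)^2 - 4 * g * n * t^2 * \<beta> * (\<beta> * p n) - \<beta>^4 * g^2)"
          unfolding E_def by (simp add: algebra_simps power2_eq_square power4_eq_xxxx)
        also have "\<dots> = - (n^4 * R n)" using yeq QR[of n] unfolding pq t_def g_def by simp
        finally show ?thesis .
      qed
      have "\<bar>y - p n\<bar> * E * \<beta>^2 = n^4 * \<bar>R n\<bar>"
      proof -
        have "\<bar>y - p n\<bar> * E * \<beta>^2 = \<bar>(y - p n) * E * \<beta>^2\<bar>" using E L by (simp add: abs_mult)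
        also have "\<dots> = n^4 * \<bar>R n\<bar>" unfolding key by (simp add: abs_mult)
        finally show ?thesis .
      qed
      also have "\<dots> \<le> n^4 * M" using elim by (intro mult_left_mono) auto
      finally have "\<bar>y - p n\<bar> * E * \<beta>^2 \<le> n^4 * M" .
      moreover have "\<bar>y - p n\<bar> * (L/2) * \<beta>^2 \<le> \<bar>y - p n\<bar> * E * \<beta>^2"
        using E by (intro mult_right_mono mult_left_mono) auto
      ultimately have "\<bar>y - p n\<bar> * (L/2) * \<beta>^2 \<le> n^4 * M" by linarith
      hence "\<bar>y - p n\<bar> \<le> 2 * M / (\<beta>^2 * L) * n^4" using L assms(2)
        by (simp add: field_simps)
      thus ?case using del elim by simp
    qed
  qed
qed

end
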